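(* Let $G=(V,E)$ be a finite connected non-bipartite graph such that the signed graph $(G,\sigma_-)$ with the all-negative sign $\sigma_-\equiv-1$ satisfies $CD^{\sigma_-}(0,N)$ for some $N\in(1,\infty]$. Let $\lambda_{|V|}$ be the largest eigenvalue of the graph Laplacian $\Delta$. Then \[ 2-\lambda_{|V|}\geq \frac{1}{4\left(1+\sqrt{(N-1)/N}\right)}\cdot\frac{1}{d(D+1)\lceil (D+1)/2\rceil}, \] where $d$ is the maximal vertex degree, $D$ the diameter of $G$, and $\sqrt{(N-1)/N}:=1$ when $N=\infty$.
   Context: $G$ is a finite simple connected graph with degrees $d_x$. For a sign $\sigma:E\to\{\pm1\}$ ($\sigma_{xy}=\sigma(\{x,y\})$) the signed Laplacian is $\Delta^{\sigma}f(x)=\frac{1}{d_x}\sum_{y\sim x}(\sigma_{xy}f(y)-f(x))$; $\Delta$ is the case $\sigma\equiv+1$, whose eigenvalues ($-\Delta f=\lambda f$) are $0=\lambda_1<\lambda_2\le\dots\le\lambda_{|V|}\le 2$. $\Gamma^{\sigma}(f,g)=\frac12\{\Delta(fg)-g\Delta^{\sigma}f-f\Delta^{\sigma}g\}$, $\Gamma_2^{\sigma}(f,g)=\frac12\{\Delta\Gamma^{\sigma}(f,g)-\Gamma^{\sigma}(g,\Delta^{\sigma}f)-\Gamma^{\sigma}(f,\Delta^{\sigma}g)\}$. $CD^{\sigma}(K,N)$ means $\Gamma_2^{\sigma}(f,f)(x)\ge\frac1N(\Delta^\sigma f)^2(x)+K\Gamma^\sigma(f,f)(x)$ for all $f:V\to\mathbb{R}$,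 $x\in V$ ($\frac1N=0$ if $N=\infty$). $\lceil\cdot\rceil$ is the ceiling. *)

theory Defs
  imports Complex_Main "HOL-Library.Extended_Real"
begin

definition simple_graph :: "'a set \<Rightarrow> ('a \<Rightarrow> 'a \<Rightarrow> bool) \<Rightarrow> bool" where
  "simple_graph V E \<longleftrightarrow> finite V \<and> (\<forall>x y. E x y \<longrightarrow> x \<in> V \<and> y \<in> V)
     \<and> (\<forall>x y. E x y \<longrightarrow> E y x) \<and> (\<forall>x. \<not> E x x)"

definition edge_rel :: "'a set \<Rightarrow> ('a \<Rightarrow> 'a \<Rightarrow> bool) \<Rightarrow> ('a \<times> 'a) set" where
  "edge_rel V E = {(x, y). x \<in> V \<and> y \<in> V \<and> E x y}"

definition connected_graph :: "'a set \<Rightarrow> ('a \<Rightarrow> 'a \<Rightarrow> bool) \<Rightarrow> bool" where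
  "connected_graph V E \<longleftrightarrow> V \<noteq> {} \<and> (\<forall>x\<in>V. \<forall>y\<in>V. (x, y) \<in> (edge_rel V E)\<^sup>*)"

definition bipartite :: "'a set \<Rightarrow> ('a \<Rightarrow> 'a \<Rightarrow> bool) \<Rightarrow> bool" where
  "bipartite V E \<longleftrightarrow> (\<exists>c :: 'a \<Rightarrow> bool. \<forall>x\<in>V. \<forall>y\<in>V. E x y \<longrightarrow> c x \<noteq> c y)"

definition nbrs :: "'a set \<Rightarrow> ('a \<Rightarrow> 'a \<Rightarrow> bool) \<Rightarrow> 'a \<Rightarrow> 'a set" where
  "nbrs V E x = {y \<in> V. E x y}"

definition deg :: "'a set \<Rightarrow> ('a \<Rightarrow> 'a \<Rightarrow> bool) \<Rightarrow> 'a \<Rightarrow> nat" where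
  "deg V E x = card (nbrs V E x)"

definition max_degree :: "'a set \<Rightarrow> ('a \<Rightarrow> 'a \<Rightarrow> bool) \<Rightarrow> nat" where
  "max_degree V E = Max (deg V E ` V)"

definition gdist :: "'a set \<Rightarrow> ('a \<Rightarrow> 'a \<Rightarrow> bool) \<Rightarrow> 'a \<Rightarrow> 'a \<Rightarrow> nat" where
  "gdist V E x y = (LEAST n. (x, y) \<in> (edge_rel V E) ^^ n)"

definition diameter :: "'a set \<Rightarrow> ('a \<Rightarrow> 'a \<Rightarrow> bool) \<Rightarrow> nat" where
  "diameter V E = Max {gdist V E x y | x y. x \<in> V \<and> y \<in> V}"

definition sgn_laplacian :: "'a set \<Rightarrow> ('a \<Rightarrow> 'a \<Rightarrow> bool) \<Rightarrow> ('a \<Rightarrow> 'a \<Rightarrow> real)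
    \<Rightarrow> ('a \<Rightarrow> real) \<Rightarrow> 'a \<Rightarrow> real" where
  "sgn_laplacian V E \<sigma> f x = (1 / real (deg V E x)) * (\<Sum>y\<in>nbrs V E x. \<sigma> x y * f y - f x)"

definition laplacian :: "'a set \<Rightarrow> ('a \<Rightarrow> 'a \<Rightarrow> bool) \<Rightarrow> ('a \<Rightarrow> real) \<Rightarrow> 'a \<Rightarrow> real" where
  "laplacian V E = sgn_laplacian V E (\<lambda>_ _. 1)"

definition Gamma :: "'a set \<Rightarrow> ('a \<Rightarrow> 'a \<Rightarrow> bool) \<Rightarrow> ('a \<Rightarrow> 'a \<Rightarrow> real)
    \<Rightarrow> ('a \<Rightarrow> real) \<Rightarrow> ('a \<Rightarrow> real) \<Rightarrow> 'a \<Rightarrow> real" where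
  "Gamma V E \<sigma> f g x = (1/2) * (laplacian V E (\<lambda>z. f z * g z) x
      - g x * sgn_laplacian V E \<sigma> f x - f x * sgn_laplacian V E \<sigma> g x)"

definition Gamma2 :: "'a set \<Rightarrow> ('a \<Rightarrow> 'a \<Rightarrow> bool) \<Rightarrow> ('a \<Rightarrow> 'a \<Rightarrow> real)
    \<Rightarrow> ('a \<Rightarrow> real) \<Rightarrow> ('a \<Rightarrow> real) \<Rightarrow> 'a \<Rightarrow> real" where
  "Gamma2 V E \<sigma> f g x = (1/2) * (laplacian V E (Gamma V E \<sigma> f g) x
      - Gamma V E \<sigma> g (sgn_laplacian V E \<sigma> f) x - Gamma V E \<sigma> f (sgn_laplacian V E \<sigma> g) x)"

definition recip_dim :: "ereal \<Rightarrow> real" where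
  "recip_dim N = (if N = \<infinity> then 0 else 1 / real_of_ereal N)"

definition CD :: "'a set \<Rightarrow> ('a \<Rightarrow> 'a \<Rightarrow> bool) \<Rightarrow> ('a \<Rightarrow> 'a \<Rightarrow> real) \<Rightarrow> real \<Rightarrow> ereal \<Rightarrow> bool" where
  "CD V E \<sigma> K N \<longleftrightarrow> (\<forall>f :: 'a \<Rightarrow> real. \<forall>x\<in>V.
      Gamma2 V E \<sigma> f f x \<ge> recip_dim N * (sgn_laplacian V E \<sigma> f x)\<^sup>2 + K * Gamma V E \<sigma> f f x)"

definition is_lap_eigenvalue :: "'a set \<Rightarrow> ('a \<Rightarrow> 'a \<Rightarrow> bool) \<Rightarrow> real \<Rightarrow> bool" where
  "is_lap_eigenvalue V E l \<longleftrightarrow> (\<exists>f :: 'a \<Rightarrow> real. (\<exists>x\<in>V. f x \<noteq> 0) \<and>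
      (\<forall>x\<in>V. - laplacian V E f x = l * f x))"

definition lambda_max :: "'a set \<Rightarrow> ('a \<Rightarrow> 'a \<Rightarrow> bool) \<Rightarrow> real" where
  "lambda_max V E = Max {l. is_lap_eigenvalue V E l}"

definition sqrt_dim :: "ereal \<Rightarrow> real" where
  "sqrt_dim N = (if N = \<infinity> then 1 else sqrt ((real_of_ereal N - 1) / real_of_ereal N))"

end

theory Submission
  imports Defs "HOL-Library.Function_Algebras"
begin
lemma nbrs_sub: "nbrs V E x \<subseteq> V" by (auto simp: nbrs_def)

lemma nbrs_fin: "simple_graph V E \<Longrightarrow> finite (nbrs V E x)"
  by (metis finite_subset nbrs_sub simple_graph_def)

lemma Gamma_neg:
  "Gamma V E (\<lambda>_ _. -1) f g x = (1 / (2 * real (deg V E x))) *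
     (\<Sum>y\<in>nbrs V E x. (f y + f x) * (g y + g x))"
proof -
  have "(\<Sum>y\<in>nbrs V E x. f y * g y - f x * g x) - g x * (\<Sum>y\<in>nbrs V E x. - 1 * f y - f x)
        - f x * (\<Sum>y\<in>nbrs V E x. - 1 * g y - g x)
      = (\<Sum>y\<in>nbrs V E x. (f y + f x) * (g y + g x))"
    by (simp add: sum_distrib_left sum_subtractf[symmetric] sum.distrib[symmetric] algebra_simps)
  moreover have "\<And>A B C a b d::real. (1/2)*((1/d)*A - b*((1/d)*B) - a*((1/d)*C)) = 1/(2*d)*(A - b*B - a*C)"
    by (case_tac "d=0") (simp_all add: field_simps)
  ultimately show ?thesis
    unfolding Gamma_def laplacian_def sgn_laplacian_def
    by (simp only: mult_1)
qed

lemma sum_nbrs_pairs: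
  assumes "simple_graph V E"
  shows "(\<Sum>x\<in>V. \<Sum>y\<in>nbrs V E x. g x y) = (\<Sum>(x,y)\<in>{(x,y). x \<in> V \<and> y \<in> V \<and> E x y}. g x y)"
proof -
  have fin: "finite V" using assms simple_graph_def by blast
  have "(\<Sum>x\<in>V. \<Sum>y\<in>nbrs V E x. g x y) = (\<Sum>(x,y)\<in>Sigma V (nbrs V E). g x y)"
    by (rule sum.Sigma[OF fin]) (simp add: nbrs_fin[OF assms])
  moreover have "Sigma V (nbrs V E) = {(x,y). x \<in> V \<and> y \<in> V \<and> E x y}" by (auto simp: nbrs_def)
  ultimately show ?thesis by simp
qed

lemma sum_swap_nbrs:
  assumes "simple_graph V E"
  shows "(\<Sum>x\<in>V. \<Sum>y\<in>nbrs V E x. h x y) = (\<Sum>x\<in>V. \<Sum>y\<in>nbrs V E x. h y x)"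
proof -
  let ?P = "{(x,y). x \<in> V \<and> y \<in> V \<and> E x y}"
  have "(\<Sum>(x,y)\<in>?P. h y x) = (\<Sum>(x,y)\<in>prod.swap ` ?P. h x y)"
    by (subst sum.reindex) (auto simp: inj_on_def)
  moreover have "prod.swap ` ?P = ?P"
    using assms unfolding simple_graph_def by force
  ultimately show ?thesis using sum_nbrs_pairs[OF assms, of h] sum_nbrs_pairs[OF assms, of "\<lambda>x y. h y x"] by simp
qed

lemma sum_fun_app: "(sum F A) x = (\<Sum>a\<in>A. F a x)" for F :: "'b \<Rightarrow> 'a \<Rightarrow> real"
  by (induct A rule: infinite_finite_induct) auto

lemma fsc_vs: "vector_space (\<lambda>(c::real) (g::'a\<Rightarrow>real) x. c * g x)"
  by unfold_locales (simp_all add: fun_eq_iff algebra_simps)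

lemma lap_cong:
  assumes "\<And>y. y \<in> V \<Longrightarrow> f y = g y" "x \<in> V"
  shows "laplacian V E f x = laplacian V E g x"
  unfolding laplacian_def sgn_laplacian_def
  using assms nbrs_sub by (metis (no_types, lifting) subsetD sum.cong)

lemma lap_sym:
  assumes sg: "simple_graph V E" and dp: "\<forall>x\<in>V. deg V E x > 0"
  shows "(\<Sum>x\<in>V. real (deg V E x) * u x * laplacian V E w x)
       = (\<Sum>x\<in>V. real (deg V E x) * laplacian V E u x * w x)"
proof -
  have a: "real (deg V E x) * u x * laplacian V E w x
       = (\<Sum>y\<in>nbrs V E x. u x * w y) - (\<Sum>y\<in>nbrs V E x. u x * w x)" if "x \<in> V" for x u w
  proof -
    have "real (deg V E x) * u x * laplacian V E w x = u x * (\<Sum>y\<in>nbrs V E x. w y - w x)"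
      using dp that unfolding laplacian_def sgn_laplacian_def by auto
    then show ?thesis by (simp add: sum_distrib_left sum_subtractf right_diff_distrib)
  qed
  have b: "real (deg V E x) * laplacian V E u x * w x
       = (\<Sum>y\<in>nbrs V E x. w x * u y) - (\<Sum>y\<in>nbrs V E x. u x * w x)" if "x \<in> V" for x
    using a[OF that, of w u] by (simp add: mult_ac)
  have "(\<Sum>x\<in>V. real (deg V E x) * u x * laplacian V E w x)
      = (\<Sum>x\<in>V. \<Sum>y\<in>nbrs V E x. u x * w y) - (\<Sum>x\<in>V. \<Sum>y\<in>nbrs V E x. u x * w x)"
    by (simp add: a sum_subtractf)
  also have "(\<Sum>x\<in>V. \<Sum>y\<in>nbrs V E x. u x * w y) = (\<Sum>x\<in>V. \<Sum>y\<in>nbrs V E x. w x * u y)"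
    using sum_swap_nbrs[OF sg, of "\<lambda>x y. u x * w y"] by (simp add: mult_ac)
  also have "(\<Sum>x\<in>V. \<Sum>y\<in>nbrs V E x. w x * u y) - (\<Sum>x\<in>V. \<Sum>y\<in>nbrs V E x. u x * w x)
      = (\<Sum>x\<in>V. real (deg V E x) * laplacian V E u x * w x)"
    by (simp add: b sum_subtractf)
  finally show ?thesis .
qed

lemma eig_finite:
  assumes sg: "simple_graph V E" and dp: "\<forall>x\<in>V. deg V E x > 0"
  shows "finite {l. is_lap_eigenvalue V E l}"
proof (rule ccontr)
  let ?S = "{l. is_lap_eigenvalue V E l}"
  assume inf: "infinite ?S"
  have finV: "finite V" using sg simple_graph_def by blast
  interpret vs: vector_space "\<lambda>(c::real) (g::'a\<Rightarrow>real) x. c * g x" by (rule fsc_vs)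
  have "\<exists>g. (\<forall>x. x \<notin> V \<longrightarrow> g x = 0) \<and> (\<exists>x\<in>V. g x \<noteq> 0) \<and> (\<forall>x\<in>V. - laplacian V E g x = l * g x)"
    if "l \<in> ?S" for l
  proof -
    from that obtain f where f: "\<exists>x\<in>V. f x \<noteq> 0" "\<forall>x\<in>V. - laplacian V E f x = l * f x"
      by (auto simp: is_lap_eigenvalue_def)
    let ?g = "\<lambda>x. if x \<in> V then f x else 0"
    have "\<forall>x\<in>V. laplacian V E ?g x = laplacian V E f x" by (intro ballI lap_cong) auto
    then show ?thesis using f by (intro exI[of _ ?g]) auto
  qed
  then obtain \<phi> where phi: "\<And>l. l \<in> ?S \<Longrightarrow> (\<forall>x. x \<notin> V \<longrightarrow> \<phi> l x = 0) \<and> (\<exists>x\<in>V. \<phi> l x \<noteq> 0)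
       \<and> (\<forall>x\<in>V. - laplacian V E (\<phi> l) x = l * \<phi> l x)"
    by metis
  define ip where "ip u w = (\<Sum>x\<in>V. real (deg V E x) * u x * w x)" for u w :: "'a \<Rightarrow> real"
  have orth: "ip (\<phi> l) (\<phi> l') = 0" if "l \<in> ?S" "l' \<in> ?S" "l \<noteq> l'" for l l'
  proof -
    have "l' * ip (\<phi> l) (\<phi> l') = (\<Sum>x\<in>V. real (deg V E x) * \<phi> l x * (l' * \<phi> l' x))"
      unfolding ip_def by (simp add: sum_distrib_left mult_ac)
    also have "\<dots> = - (\<Sum>x\<in>V. real (deg V E x) * \<phi> l x * laplacian V E (\<phi> l') x)"
    proof -
      have "\<forall>x\<in>V. laplacian V E (\<phi> l') x = -(l' * \<phi> l' x)" using phi[OF that(2)] by force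
      then show ?thesis by (simp add: sum_negf[symmetric])
    qed
    also have "\<dots> = - (\<Sum>x\<in>V. real (deg V E x) * laplacian V E (\<phi> l) x * \<phi> l' x)"
      using lap_sym[OF sg dp] by simp
    also have "\<dots> = (\<Sum>x\<in>V. real (deg V E x) * (l * \<phi> l x) * \<phi> l' x)"
    proof -
      have "\<forall>x\<in>V. laplacian V E (\<phi> l) x = -(l * \<phi> l x)" using phi[OF that(1)] by force
      then show ?thesis by (simp add: sum_negf[symmetric])
    qed
    also have "\<dots> = l * ip (\<phi> l) (\<phi> l')"
      unfolding ip_def by (simp add: sum_distrib_left mult_ac)
    finally show ?thesis using that(3) by simp
  qed
  have pos: "ip (\<phi> l) (\<phi> l) > 0" if lS: "l \<in> ?S" for l
  proof -
    obtain x0 where x0: "x0 \<in> V" "\<phi> l x0 \<noteq> 0" using phi[OF lS] by blast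
    have "0 < \<phi> l x0 * \<phi> l x0" using x0(2) by (metis not_real_square_gt_zero)
    moreover have "0 < real (deg V E x0)" using dp x0 by auto
    ultimately have "0 < real (deg V E x0) * \<phi> l x0 * \<phi> l x0" by (simp add: mult.assoc)
    also have "\<dots> \<le> ip (\<phi> l) (\<phi> l)" unfolding ip_def
      by (rule member_le_sum) (use finV x0 in \<open>auto simp: mult.assoc\<close>)
    finally show ?thesis .
  qed
  obtain L where L: "L \<subseteq> ?S" "finite L" "card L = Suc (card V)"
    using infinite_arbitrarily_large[OF inf] by blast
  have inj: "inj_on \<phi> L"
  proof (rule inj_onI)
    fix a b assume ab: "a \<in> L" "b \<in> L" "\<phi> a = \<phi> b"
    show "a = b"
    proof (rule ccontr)
      assume "a \<noteq> b"
      then have "ip (\<phi> a) (\<phi> b) = 0" using orth ab L(1) by blast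
      moreover have "ip (\<phi> a) (\<phi> b) > 0" using pos[of a] ab L(1) by auto
      ultimately show False by simp
    qed
  qed
  let ?T = "\<phi> ` L"
  have cardT: "card ?T = Suc (card V)" using card_image[OF inj] L by simp
  have indep: "vs.independent ?T"
  proof
    assume "vs.dependent ?T"
    then obtain u where u: "\<exists>v\<in>?T. u v \<noteq> 0" "(\<Sum>v\<in>?T. (\<lambda>x. u v * v x)) = 0"
      using vs.dependent_finite[of ?T] L(2) by auto
    then obtain l0 where l0: "l0 \<in> L" "u (\<phi> l0) \<noteq> 0" by blast
    have "0 = ip (\<Sum>v\<in>?T. (\<lambda>x. u v * v x)) (\<phi> l0)" using u(2) unfolding ip_def by simp
    also have "\<dots> = (\<Sum>x\<in>V. \<Sum>v\<in>?T. real (deg V E x) * u v * v x * \<phi> l0 x)"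
      unfolding ip_def sum_fun_app by (simp add: sum_distrib_left sum_distrib_right mult_ac)
    also have "\<dots> = (\<Sum>v\<in>?T. \<Sum>x\<in>V. real (deg V E x) * u v * v x * \<phi> l0 x)"
      by (rule sum.swap)
    also have "\<dots> = (\<Sum>v\<in>?T. u v * ip v (\<phi> l0))"
      unfolding ip_def by (simp add: sum_distrib_left mult_ac)
    also have "\<dots> = (\<Sum>l\<in>L. u (\<phi> l) * ip (\<phi> l) (\<phi> l0))"
      by (rule sum.reindex[OF inj, unfolded comp_def])
    also have "\<dots> = u (\<phi> l0) * ip (\<phi> l0) (\<phi> l0)"
      by (rule sum.remove[OF L(2) l0(1), THEN trans]) (use orth L(1) l0 in \<open>auto intro!: sum.neutral; blast\<close>)
    finally show False using pos[of l0] l0 L(1) by auto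
  qed
  let ?B = "(\<lambda>v x. if x = v then (1::real) else 0) ` V"
  have span: "?T \<subseteq> vs.span ?B"
  proof
    fix g assume "g \<in> ?T"
    then obtain l where l: "l \<in> L" "g = \<phi> l" by blast
    have "g = (\<Sum>v\<in>V. (\<lambda>x. g v * (if x = v then 1 else 0)))"
      using phi[of l] l L(1) finV by (auto simp: fun_eq_iff sum_fun_app if_distrib cong: if_cong)
    also have "\<dots> \<in> vs.span ?B"
      by (intro vs.span_sum vs.span_scale vs.span_base) auto
    finally show "g \<in> vs.span ?B" .
  qed
  have "card ?T \<le> card ?B" using vs.independent_span_bound[OF _ indep span] finV by auto
  also have "\<dots> \<le> card V" by (rule card_image_le[OF finV])
  finally show False using cardT by simp
qed

lemma relpow_sym:
  assumes "\<And>a b. (a,b) \<in> R \<Longrightarrow> (b,a) \<in> R"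
  shows "(a,b) \<in> R^^n \<Longrightarrow> (b,a) \<in> R^^n"
proof (induction n arbitrary: b)
  case 0 then show ?case by simp
next
  case (Suc n)
  then obtain c where "(a,c) \<in> R^^n" "(c,b) \<in> R" by (meson relpow_Suc_E)
  then show ?case using Suc.IH assms by (meson relpow_Suc_I2)
qed

lemma edge_rel_sym: "simple_graph V E \<Longrightarrow> (a,b) \<in> edge_rel V E \<Longrightarrow> (b,a) \<in> edge_rel V E"
  by (auto simp: edge_rel_def simple_graph_def)

lemma odd_closed_walk:
  assumes sg: "simple_graph V E" and conn: "connected_graph V E" and nb: "\<not> bipartite V E"
    and x0: "x0 \<in> V"
  shows "\<exists>l. odd l \<and> l \<le> 2 * diameter V E + 1 \<and> (x0,x0) \<in> (edge_rel V E)^^l"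
proof -
  let ?R = "edge_rel V E"
  let ?gd = "\<lambda>y. gdist V E x0 y"
  have finV: "finite V" using sg simple_graph_def by blast
  have reach: "(x0,y) \<in> ?R^^(?gd y)" if "y \<in> V" for y
  proof -
    have "(x0,y) \<in> ?R\<^sup>*" using conn x0 that by (auto simp: connected_graph_def)
    then obtain n where "(x0,y) \<in> ?R^^n" using rtrancl_power by blast
    then show ?thesis unfolding gdist_def by (rule LeastI)
  qed
  have leD: "?gd y \<le> diameter V E" if "y \<in> V" for y
  proof -
    have "{gdist V E x y | x y. x \<in> V \<and> y \<in> V} = (\<lambda>(x,y). gdist V E x y) ` (V \<times> V)" by auto
    then have "finite {gdist V E x y | x y. x \<in> V \<and> y \<in> V}" using finV by simp
    then show ?thesis unfolding diameter_def by (rule Max_ge) (use x0 that in blast)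
  qed
  have step: "?gd z \<le> Suc (?gd y)" if "y \<in> V" "z \<in> V" "E y z" for y z
  proof -
    have "(y,z) \<in> ?R" using that by (simp add: edge_rel_def)
    then have "(x0,z) \<in> ?R^^(Suc (?gd y))" using reach[OF that(1)] by (rule relpow_Suc_I[rotated])
    then show ?thesis unfolding gdist_def by (rule Least_le)
  qed
  have "\<not> (\<forall>y\<in>V. \<forall>z\<in>V. E y z \<longrightarrow> even (?gd y) \<noteq> even (?gd z))"
  proof
    assume H: "\<forall>y\<in>V. \<forall>z\<in>V. E y z \<longrightarrow> even (?gd y) \<noteq> even (?gd z)"
    have "\<exists>c. \<forall>y\<in>V. \<forall>z\<in>V. E y z \<longrightarrow> c y \<noteq> (c z :: bool)"
      using H by (intro exI[of _ "\<lambda>x. even (?gd x)"]) simp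
    then have "bipartite V E" unfolding bipartite_def by simp
    with nb show False by simp
  qed
  then obtain y z where yz: "y \<in> V" "z \<in> V" "E y z" "even (?gd y) = even (?gd z)"
    by blast
  have Ezy: "E z y" using sg yz unfolding simple_graph_def by blast
  have "?gd y \<noteq> Suc (?gd z)" "?gd z \<noteq> Suc (?gd y)" using yz(4) by auto
  then have eq: "?gd y = ?gd z" using step[OF yz(1-3)] step[OF yz(2,1) Ezy] by linarith
  define j where "j = ?gd y"
  have "(y,z) \<in> ?R" using yz by (simp add: edge_rel_def)
  with reach[OF yz(1)] have "(x0,z) \<in> ?R^^(Suc j)" unfolding j_def by (rule relpow_Suc_I)
  moreover have "(z,x0) \<in> ?R^^j"
  proof -
    have "(x0,z) \<in> ?R^^j" using reach[OF yz(2)] eq unfolding j_def by simp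
    then show ?thesis using relpow_sym[where R="?R" and n=j] edge_rel_sym[OF sg] by blast
  qed
  ultimately have "(x0,x0) \<in> ?R^^(Suc j + j)" unfolding relpow_add[of "Suc j" j ?R] by (rule relcompI)
  moreover have "j \<le> diameter V E" unfolding j_def by (rule leD[OF yz(1)])
  ultimately show ?thesis by (intro exI[of _ "Suc j + j"]) auto
qed

lemma nobacktrack_walk:
  assumes "odd l" "(x0,x0) \<in> R^^l"
  shows "\<exists>l' p. odd l' \<and> l' \<le> l \<and> p 0 = x0 \<and> p l' = x0 \<and> (\<forall>i<l'. (p i, p (Suc i)) \<in> R)
     \<and> (\<forall>i. i + 2 \<le> l' \<longrightarrow> p i \<noteq> p (i+2))"
proof -
  let ?P = "\<lambda>l. odd l \<and> (x0,x0) \<in> R^^l"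
  define l0 where "l0 = (LEAST l. ?P l)"
  have P0: "?P l0" unfolding l0_def by (rule LeastI[of ?P l]) (use assms in auto)
  have le: "l0 \<le> l" unfolding l0_def by (rule Least_le) (use assms in auto)
  obtain p where p: "p 0 = x0" "p l0 = x0" "\<forall>i<l0. (p i, p (Suc i)) \<in> R"
    using P0 unfolding relpow_fun_conv by blast
  have nb: "p i \<noteq> p (i+2)" if "i + 2 \<le> l0" for i
  proof
    assume bt: "p i = p (i+2)"
    define q where "q k = (if k \<le> i then p k else p (k+2))" for k
    have "q 0 = x0" using p by (simp add: q_def)
    moreover have "q (l0 - 2) = x0"
    proof (cases "l0 - 2 \<le> i")
      case True
      then have a: "l0 - 2 = i" and b: "i + 2 = l0" using that by simp_all
      have "q (l0 - 2) = p (i+2)" using a bt by (simp add: q_def)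
      then show ?thesis using b p by simp
    next
      case False
      then have "l0 - 2 + 2 = l0" using that by simp
      then show ?thesis using p False by (simp add: q_def)
    qed
    moreover have "\<forall>k<l0-2. (q k, q (Suc k)) \<in> R"
    proof (intro allI impI)
      fix k assume k: "k < l0 - 2"
      show "(q k, q (Suc k)) \<in> R"
      proof (cases "k < i")
        case True then show ?thesis using p(3) k by (auto simp: q_def)
      next
        case False
        then have "(p (k+2), p (Suc (k+2))) \<in> R" using p(3) k by auto
        then show ?thesis using False bt by (cases "k = i") (auto simp: q_def)
      qed
    qed
    ultimately have "(x0,x0) \<in> R^^(l0-2)" unfolding relpow_fun_conv by (intro exI[of _ q]) blast
    moreover have "odd (l0 - 2)" using P0 that by auto
    ultimately have "?P (l0-2)" by simp
    moreover have "l0 - 2 < l0" using that by simp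
    ultimately show False unfolding l0_def using not_less_Least by blast
  qed
  show ?thesis by (intro exI[of _ l0] exI[of _ p]) (use P0 le p nb in auto)
qed

lemma sum_pairs: "(\<Sum>k<2*n. h k) = (\<Sum>i<n. h (2*i) + h (2*i+1))" for h :: "nat \<Rightarrow> real"
  by (induction n) (simp_all add: numeral_2_eq_2)

lemma sq2: "(\<bar>a\<bar> + \<bar>b\<bar>)^2 \<le> 2 * (a^2 + b^2)" for a b :: real
proof -
  have "0 \<le> (\<bar>a\<bar> - \<bar>b\<bar>)^2" by simp
  then show ?thesis by (simp add: power2_eq_square algebra_simps abs_mult_self)
qed

lemma walk_bound:
  fixes f :: "'a \<Rightarrow> real"
  assumes sg: "simple_graph V E"
    and K: "\<forall>x\<in>V. (\<Sum>y\<in>nbrs V E x. (f x + f y)^2) \<le> K"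
    and p0: "p 0 = x0" and pl: "p l = x0" and pe: "\<forall>i<l. (p i, p (Suc i)) \<in> edge_rel V E"
    and pb: "\<forall>i. i + 2 \<le> l \<longrightarrow> p i \<noteq> p (i+2)" and lj: "l = 2*j+1"
  shows "2 * \<bar>f x0\<bar> \<le> (real j * sqrt 2 + 1) * sqrt K"
proof -
  define e where "e k = f (p k) + f (p (Suc k))" for k
  have tele: "(\<Sum>k<n. (-1)^k * e k) = f (p 0) - (-1)^n * f (p n)" for n
    by (induction n) (simp_all add: e_def algebra_simps)
  have "2 * f x0 = (\<Sum>k<l. (-1)^k * e k)" using tele[of l] p0 pl lj by simp
  then have "2 * \<bar>f x0\<bar> = \<bar>\<Sum>k<l. (-1)^k * e k\<bar>" by (metis abs_mult abs_numeral)
  also have "\<dots> \<le> (\<Sum>k<l. \<bar>(-1)^k * e k\<bar>)" by (rule sum_abs)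
  also have "\<dots> = (\<Sum>k<l. \<bar>e k\<bar>)" by (simp add: abs_mult power_abs)
  also have "\<dots> = (\<Sum>i<j. \<bar>e (2*i)\<bar> + \<bar>e (2*i+1)\<bar>) + \<bar>e (2*j)\<bar>"
    using lj sum_pairs[of "\<lambda>k. \<bar>e k\<bar>" j] by simp
  also have "\<dots> \<le> real j * sqrt (2 * K) + sqrt K"
  proof (rule add_mono)
    have "\<bar>e (2*i)\<bar> + \<bar>e (2*i+1)\<bar> \<le> sqrt (2 * K)" if i: "i < j" for i
    proof -
      let ?u = "p (2*i)" and ?v = "p (2*i+1)" and ?w = "p (2*i+2)"
      have uv: "(?u, ?v) \<in> edge_rel V E" using pe lj i by auto
      have "2*i+1 < l" using lj i by simp
      then have "(p (2*i+1), p (Suc (2*i+1))) \<in> edge_rel V E" using pe by blast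
      moreover have "Suc (2*i+1) = 2*i+2" by simp
      ultimately have vw: "(?v, ?w) \<in> edge_rel V E" by simp
      have "2*i + 2 \<le> l" using lj i by simp
      then have uw: "?u \<noteq> ?w" using pb by blast
      have v: "?v \<in> V" and sub: "{?u, ?w} \<subseteq> nbrs V E ?v"
        using uv vw sg by (auto simp: edge_rel_def nbrs_def simple_graph_def)
      have "(f ?v + f ?u)^2 + (f ?v + f ?w)^2 = (\<Sum>y\<in>{?u,?w}. (f ?v + f y)^2)" using uw by simp
      also have "\<dots> \<le> (\<Sum>y\<in>nbrs V E ?v. (f ?v + f y)^2)"
        by (rule sum_mono2[OF nbrs_fin[OF sg] sub]) simp
      also have "\<dots> \<le> K" using K v by blast
      finally have s: "(f ?v + f ?u)^2 + (f ?v + f ?w)^2 \<le> K" .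
      have ee: "e (2*i) = f ?u + f ?v" "e (2*i+1) = f ?v + f ?w" by (simp_all add: e_def)
      have "(\<bar>e (2*i)\<bar> + \<bar>e (2*i+1)\<bar>)^2 \<le> 2 * ((e (2*i))^2 + (e (2*i+1))^2)"
        by (rule sq2)
      also have "\<dots> \<le> 2 * K" using s unfolding ee by (simp add: add.commute)
      finally show ?thesis by (rule real_le_rsqrt)
    qed
    then have "(\<Sum>i<j. \<bar>e (2*i)\<bar> + \<bar>e (2*i+1)\<bar>) \<le> real (card {..<j}) * sqrt (2 * K)"
      by (intro sum_bounded_above) auto
    then show "(\<Sum>i<j. \<bar>e (2*i)\<bar> + \<bar>e (2*i+1)\<bar>) \<le> real j * sqrt (2 * K)" by simp
  next
    let ?u = "p (2*j)" and ?v = "p (2*j+1)"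
    have uv: "(?u, ?v) \<in> edge_rel V E" using pe lj by auto
    have u: "?u \<in> V" and sub: "{?v} \<subseteq> nbrs V E ?u"
      using uv by (auto simp: edge_rel_def nbrs_def)
    have "(f ?u + f ?v)^2 = (\<Sum>y\<in>{?v}. (f ?u + f y)^2)" by simp
    also have "\<dots> \<le> (\<Sum>y\<in>nbrs V E ?u. (f ?u + f y)^2)"
      by (rule sum_mono2[OF nbrs_fin[OF sg] sub]) simp
    also have "\<dots> \<le> K" using K u by blast
    finally have "\<bar>e (2*j)\<bar>^2 \<le> K" by (simp add: e_def)
    then show "\<bar>e (2*j)\<bar> \<le> sqrt K" by (rule real_le_rsqrt)
  qed
  also have "\<dots> = (real j * sqrt 2 + 1) * sqrt K" by (simp add: real_sqrt_mult algebra_simps)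
  finally show ?thesis .
qed

lemma lap_lin:
  "laplacian V E (\<lambda>z. g z + c * h z) x = laplacian V E g x + c * laplacian V E h x"
proof -
  have "(\<Sum>y\<in>nbrs V E x. 1 * (g y + c * h y) - (g x + c * h x))
      = (\<Sum>y\<in>nbrs V E x. 1 * g y - g x) + c * (\<Sum>y\<in>nbrs V E x. 1 * h y - h x)"
    by (simp add: sum_distrib_left sum.distrib[symmetric] algebra_simps)
  then show ?thesis unfolding laplacian_def sgn_laplacian_def by (simp add: algebra_simps)
qed

lemma lap_max:
  assumes "x \<in> V" "\<forall>y\<in>V. G y \<le> G x"
  shows "laplacian V E G x \<le> 0"
proof -
  have "(\<Sum>y\<in>nbrs V E x. 1 * G y - G x) \<le> 0"
    using assms by (intro sum_nonpos) (auto simp: nbrs_def)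
  then show ?thesis unfolding laplacian_def sgn_laplacian_def
    by (simp add: divide_nonpos_nonneg)
qed

lemma deg_pos:
  assumes sg: "simple_graph V E" and conn: "connected_graph V E" and nb: "\<not> bipartite V E"
    and x: "x \<in> V"
  shows "deg V E x > 0"
proof -
  obtain u v where uv: "u \<in> V" "v \<in> V" "E u v"
  proof -
    have "\<not> (\<forall>y\<in>V. \<forall>z\<in>V. E y z \<longrightarrow> True \<noteq> True)"
    proof
      assume H: "\<forall>y\<in>V. \<forall>z\<in>V. E y z \<longrightarrow> True \<noteq> True"
      have "\<exists>c. \<forall>y\<in>V. \<forall>z\<in>V. E y z \<longrightarrow> c y \<noteq> (c z :: bool)"
        using H by (intro exI[of _ "\<lambda>x. True"]) simp
      then have "bipartite V E" unfolding bipartite_def by simp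
      with nb show False by simp
    qed
    then show ?thesis using that by blast
  qed
  have "(x,u) \<in> (edge_rel V E)\<^sup>*" using conn x uv by (auto simp: connected_graph_def)
  then have "\<exists>w. (x,w) \<in> edge_rel V E"
  proof (cases rule: converse_rtranclE)
    case base then show ?thesis using uv by (auto simp: edge_rel_def)
  next
    case (step w) then show ?thesis by blast
  qed
  then obtain w where "w \<in> nbrs V E x" by (auto simp: edge_rel_def nbrs_def)
  then show ?thesis unfolding deg_def using nbrs_fin[OF sg] card_gt_0_iff by blast
qed

lemma vertex_bound:
  fixes f :: "'a \<Rightarrow> real"
  assumes sg: "simple_graph V E" and conn: "connected_graph V E" and nb: "\<not> bipartite V E"
    and x0: "x0 \<in> V"
    and K: "\<forall>x\<in>V. (\<Sum>y\<in>nbrs V E x. (f x + f y)^2) \<le> K"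
  shows "2 * \<bar>f x0\<bar> \<le> (real (diameter V E) * sqrt 2 + 1) * sqrt K"
proof -
  obtain l where l: "odd l" "l \<le> 2 * diameter V E + 1" "(x0,x0) \<in> (edge_rel V E)^^l"
    using odd_closed_walk[OF sg conn nb x0] by blast
  obtain l' p where w: "odd l'" "l' \<le> l" "p 0 = x0" "p l' = x0" "\<forall>i<l'. (p i, p (Suc i)) \<in> edge_rel V E"
     "\<forall>i. i + 2 \<le> l' \<longrightarrow> p i \<noteq> p (i+2)"
    using nobacktrack_walk[OF l(1,3)] by blast
  obtain j where j: "l' = 2*j+1" using w(1) oddE by blast
  have "j \<le> diameter V E" using j w(2) l(2) by simp
  have "0 \<le> (\<Sum>y\<in>nbrs V E x0. (f x0 + f y)^2)" by (intro sum_nonneg) simp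
  then have K0: "0 \<le> K" using K x0 by force
  have "2 * \<bar>f x0\<bar> \<le> (real j * sqrt 2 + 1) * sqrt K"
    by (rule walk_bound[OF sg K w(3,4,5,6) j])
  also have "\<dots> \<le> (real (diameter V E) * sqrt 2 + 1) * sqrt K"
    using \<open>j \<le> diameter V E\<close> K0 by (intro mult_right_mono add_right_mono mult_right_mono) auto
  finally show ?thesis .
qed

theorem corollary3p14:
  fixes V :: "'a set" and E :: "'a \<Rightarrow> 'a \<Rightarrow> bool" and N :: ereal
  assumes "simple_graph V E" and "connected_graph V E" and "\<not> bipartite V E"
    and "N > 1" and "CD V E (\<lambda>_ _. -1) 0 N"
  shows "2 - lambda_max V E \<ge>
    1 / (4 * (1 + sqrt_dim N)) *
    (1 / (real (max_degree V E) * (real (diameter V E) + 1)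
          * real_of_int \<lceil>(real (diameter V E) + 1) / 2\<rceil>))"
proof -
  let ?\<sigma> = "(\<lambda>_ _. -1) :: 'a \<Rightarrow> 'a \<Rightarrow> real"
  note sg = assms(1)
  have finV: "finite V" using sg simple_graph_def by blast
  have Vne: "V \<noteq> {}" using assms(2) connected_graph_def by blast
  have dp: "\<forall>x\<in>V. deg V E x > 0" using deg_pos[OF assms(1-3)] by blast
  define S where "S = {l. is_lap_eigenvalue V E l}"
  have finS: "finite S" unfolding S_def by (rule eig_finite[OF sg dp])
  have "0 \<in> S"
  proof -
    obtain x where "x \<in> V" using Vne by blast
    moreover have "laplacian V E (\<lambda>_. 1) y = 0" for y by (simp add: laplacian_def sgn_laplacian_def)
    ultimately show ?thesis unfolding S_def is_lap_eigenvalue_def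
      by (intro CollectI exI[of _ "\<lambda>_. 1"]) auto
  qed
  then have "lambda_max V E \<in> S" unfolding lambda_max_def S_def[symmetric] using finS Max_in by blast
  then obtain f where fnz: "\<exists>x\<in>V. f x \<noteq> 0" and feig: "\<forall>x\<in>V. - laplacian V E f x = lambda_max V E * f x"
    unfolding S_def is_lap_eigenvalue_def by blast
  define lam where "lam = 2 - lambda_max V E"
  define d where "d = real (max_degree V E)"
  define D where "D = real (diameter V E)"
  define c where "c = real_of_int \<lceil>(real (diameter V E) + 1) / 2\<rceil>"
  define r where "r = recip_dim N"
  define s where "s = sqrt_dim N"
  have s_pos: "s > 0" and s_sq: "s^2 = 1 - r"
  proof -
    have "s > 0 \<and> s^2 = 1 - r"
    proof (cases N)
      case (real n)
      then have n: "n > 1" using assms(4) by simp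
      have sr: "s = sqrt ((n-1)/n)" "r = 1/n" using real unfolding s_def r_def sqrt_dim_def recip_dim_def by simp_all
      have "(n-1)/n > 0" using n by simp
      then have "s > 0" "s^2 = (n-1)/n" using sr by simp_all
      moreover have "(n-1)/n = 1 - 1/n" using n by (simp add: field_simps)
      ultimately show ?thesis using sr by simp
    next
      case PInf then show ?thesis unfolding s_def r_def sqrt_dim_def recip_dim_def by simp
    next
      case MInf then show ?thesis using assms(4) by simp
    qed
    then show "s > 0" "s^2 = 1 - r" by auto
  qed
  have degle: "real (deg V E x) \<le> d" if "x \<in> V" for x
    unfolding d_def max_degree_def using finV that by simp
  have sl: "sgn_laplacian V E ?\<sigma> f x = - lam * f x" if x: "x \<in> V" for x
  proof -
    have dx: "real (deg V E x) > 0" using dp x by simp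
    have "(\<Sum>y\<in>nbrs V E x. -1 * f y - f x) + (\<Sum>y\<in>nbrs V E x. 1 * f y - f x) = real (deg V E x) * (- 2 * f x)"
      by (simp add: sum.distrib[symmetric] deg_def)
    then have "sgn_laplacian V E ?\<sigma> f x + laplacian V E f x = -2 * f x"
      using dx unfolding laplacian_def sgn_laplacian_def by (simp add: field_simps)
    moreover have "laplacian V E f x = - (lambda_max V E * f x)" using feig x by force
    moreover have "- (2 - lambda_max V E) * f x = -2 * f x + lambda_max V E * f x" by (simp add: algebra_simps)
    ultimately show ?thesis unfolding lam_def by linarith
  qed
  have sumf: "(\<Sum>y\<in>nbrs V E x. f y + f x) = real (deg V E x) * lam * f x" if x: "x \<in> V" for x
  proof -
    have dx: "real (deg V E x) > 0" using dp x by simp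
    have "(\<Sum>y\<in>nbrs V E x. -1 * f y - f x) = - (\<Sum>y\<in>nbrs V E x. f y + f x)"
      by (simp add: sum_negf[symmetric])
    then have "- (1 / real (deg V E x)) * (\<Sum>y\<in>nbrs V E x. f y + f x) = - lam * f x"
      using sl[OF x] unfolding sgn_laplacian_def by simp
    then show ?thesis using dx by (simp add: field_simps)
  qed
  define Gm where "Gm = Gamma V E ?\<sigma> f f"
  define S2 where "S2 x = (\<Sum>y\<in>nbrs V E x. (f x + f y)^2)" for x
  have GmS2: "2 * real (deg V E x) * Gm x = S2 x" if x: "x \<in> V" for x
  proof -
    have dx: "real (deg V E x) > 0" using dp x by simp
    have "Gm x = 1 / (2 * real (deg V E x)) * S2 x"
      unfolding Gm_def S2_def Gamma_neg by (simp add: power2_eq_square add.commute)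
    then show ?thesis using dx by simp
  qed
  have S2nn: "S2 x \<ge> 0" for x unfolding S2_def by (intro sum_nonneg) simp
  define W where "W = (\<Sum>x\<in>V. real (deg V E x) * (f x)^2)"
  have energy: "(\<Sum>x\<in>V. S2 x) = 2 * lam * W"
  proof -
    have e1: "(\<Sum>x\<in>V. S2 x) = (\<Sum>x\<in>V. \<Sum>y\<in>nbrs V E x. (f x)^2) + (\<Sum>x\<in>V. \<Sum>y\<in>nbrs V E x. (f y)^2)
         + 2 * (\<Sum>x\<in>V. \<Sum>y\<in>nbrs V E x. f x * f y)"
      unfolding S2_def by (simp add: power2_sum sum.distrib sum_distrib_left mult.assoc)
    have e2: "(\<Sum>x\<in>V. \<Sum>y\<in>nbrs V E x. (f y)^2) = (\<Sum>x\<in>V. \<Sum>y\<in>nbrs V E x. (f x)^2)"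
      using sum_swap_nbrs[OF sg, of "\<lambda>x y. (f x)^2"] by simp
    have e3: "(\<Sum>x\<in>V. f x * (\<Sum>y\<in>nbrs V E x. f y + f x))
        = (\<Sum>x\<in>V. \<Sum>y\<in>nbrs V E x. f x * f y) + (\<Sum>x\<in>V. \<Sum>y\<in>nbrs V E x. (f x)^2)"
      by (simp add: sum_distrib_left sum.distrib power2_eq_square algebra_simps)
    have e4: "(\<Sum>x\<in>V. f x * (\<Sum>y\<in>nbrs V E x. f y + f x)) = lam * W"
    proof -
      have "(\<Sum>x\<in>V. f x * (\<Sum>y\<in>nbrs V E x. f y + f x)) = (\<Sum>x\<in>V. f x * (real (deg V E x) * lam * f x))"
        by (rule sum.cong[OF refl]) (simp add: sumf)
      also have "\<dots> = lam * W" unfolding W_def by (simp add: sum_distrib_left power2_eq_square mult_ac)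
      finally show ?thesis .
    qed
    show ?thesis using e1 e2 e3 e4 by simp
  qed
  have Wpos: "W > 0"
  proof -
    obtain x where x: "x \<in> V" "f x \<noteq> 0" using fnz by blast
    have "0 < real (deg V E x) * (f x)^2" using dp x by simp
    also have "\<dots> \<le> W" unfolding W_def by (rule member_le_sum) (use finV x in auto)
    finally show ?thesis .
  qed
  have lam_pos: "lam > 0"
  proof (rule ccontr)
    assume "\<not> lam > 0"
    then have "(\<Sum>x\<in>V. S2 x) \<le> 0" using energy Wpos by (simp add: mult_nonpos_nonneg)
    then have "\<forall>x\<in>V. S2 x = 0" using sum_nonneg_eq_0_iff[OF finV] S2nn by (metis antisym sum_nonneg)
    then have "\<forall>x\<in>V. (\<Sum>y\<in>nbrs V E x. (f x + f y)^2) \<le> 0" unfolding S2_def by simp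
    then have "2 * \<bar>f x\<bar> \<le> (D * sqrt 2 + 1) * sqrt 0" if "x \<in> V" for x
      unfolding D_def by (rule vertex_bound[OF assms(1-3) that])
    then show False using fnz by force
  qed
  have cdx: "laplacian V E Gm x \<ge> 2 * r * lam^2 * (f x)^2 - 2 * lam * Gm x" if x: "x \<in> V" for x
  proof -
    have GL: "Gamma V E ?\<sigma> f (sgn_laplacian V E ?\<sigma> f) x = - lam * Gm x"
    proof -
      have "(\<Sum>y\<in>nbrs V E x. (f y + f x) * (sgn_laplacian V E ?\<sigma> f y + sgn_laplacian V E ?\<sigma> f x))
          = (\<Sum>y\<in>nbrs V E x. - lam * ((f y + f x) * (f y + f x)))"
        using x by (intro sum.cong refl) (auto simp: sl nbrs_def algebra_simps)
      then show ?thesis unfolding Gm_def Gamma_neg by (simp add: sum_distrib_left[symmetric] sum_negf)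
    qed
    have "Gamma2 V E ?\<sigma> f f x \<ge> recip_dim N * (sgn_laplacian V E ?\<sigma> f x)^2 + 0 * Gamma V E ?\<sigma> f f x"
      using assms(5) x unfolding CD_def by blast
    then have "1/2 * (laplacian V E Gm x + 2 * lam * Gm x) \<ge> r * (lam * f x)^2"
      unfolding Gamma2_def GL r_def using sl[OF x] by (simp add: Gm_def algebra_simps)
    then show ?thesis by (simp add: power_mult_distrib algebra_simps)
  qed
  have lapf2: "laplacian V E (\<lambda>z. (f z)^2) x = 2 * Gm x - 2 * lam * (f x)^2" if x: "x \<in> V" for x
  proof -
    have dx: "real (deg V E x) > 0" using dp x by simp
    have "(\<Sum>y\<in>nbrs V E x. 1 * (f y)^2 - (f x)^2) = S2 x - 2 * f x * (\<Sum>y\<in>nbrs V E x. f y + f x)"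
      unfolding S2_def by (simp add: sum_distrib_left sum_subtractf[symmetric] power2_eq_square algebra_simps)
    also have "\<dots> = 2 * real (deg V E x) * Gm x - 2 * real (deg V E x) * lam * (f x)^2"
      using GmS2[OF x] sumf[OF x] by (simp add: power2_eq_square mult_ac)
    finally show ?thesis using dx unfolding laplacian_def sgn_laplacian_def by (simp add: field_simps)
  qed
  define G where "G z = Gm z + ((1+s)*lam) * (f z)^2" for z
  obtain x1 where x1: "x1 \<in> V" "\<forall>y\<in>V. G y \<le> G x1"
  proof -
    have "Max (G ` V) \<in> G ` V" using finV Vne by simp
    then obtain x1 where "x1 \<in> V" "G x1 = Max (G ` V)" by auto
    moreover have "\<forall>y\<in>V. G y \<le> Max (G ` V)" using finV by simp
    ultimately show ?thesis using that by auto
  qed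
  obtain x0 where x0: "x0 \<in> V" "\<forall>y\<in>V. (f y)^2 \<le> (f x0)^2"
  proof -
    have "Max ((\<lambda>z. (f z)^2) ` V) \<in> (\<lambda>z. (f z)^2) ` V" using finV Vne by simp
    then obtain x0 where "x0 \<in> V" "(f x0)^2 = Max ((\<lambda>z. (f z)^2) ` V)" by auto
    moreover have "\<forall>y\<in>V. (f y)^2 \<le> Max ((\<lambda>z. (f z)^2) ` V)" using finV by simp
    ultimately show ?thesis using that by auto
  qed
  define M2 where "M2 = (f x0)^2"
  have M2pos: "M2 > 0"
  proof -
    obtain x where x: "x \<in> V" "f x \<noteq> 0" using fnz by blast
    then have "0 < (f x)^2" by simp
    then show ?thesis using x0 x unfolding M2_def by force
  qed
  have g1: "Gm x1 \<le> (1+s) * lam * (f x1)^2"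
  proof -
    have "laplacian V E G x1 \<le> 0" by (rule lap_max[OF x1])
    moreover have "laplacian V E G x1 = laplacian V E Gm x1 + ((1+s)*lam) * laplacian V E (\<lambda>z. (f z)^2) x1"
      unfolding G_def by (rule lap_lin)
    ultimately have "laplacian V E Gm x1 + ((1+s)*lam) * (2 * Gm x1 - 2 * lam * (f x1)^2) \<le> 0"
      using lapf2[OF x1(1)] by simp
    then have "2 * r * lam^2 * (f x1)^2 - 2 * lam * Gm x1 + ((1+s)*lam) * (2 * Gm x1 - 2 * lam * (f x1)^2) \<le> 0"
      using cdx[OF x1(1)] by linarith
    moreover have "2 * r * lam^2 * (f x1)^2 - 2 * lam * Gm x1 + ((1+s)*lam) * (2 * Gm x1 - 2 * lam * (f x1)^2)
        = (2 * lam * s) * (Gm x1 - (1+s) * lam * (f x1)^2)"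
    proof -
      have r: "r = 1 - s^2" using s_sq by simp
      show ?thesis by (subst r) (simp add: power2_eq_square algebra_simps)
    qed
    ultimately have "(2 * lam * s) * (Gm x1 - (1+s) * lam * (f x1)^2) \<le> 0" by simp
    moreover have "2 * lam * s > 0" using lam_pos s_pos by simp
    ultimately have "Gm x1 - (1+s) * lam * (f x1)^2 \<le> 0" using lam_pos s_pos by (simp add: mult_le_0_iff)
    then show ?thesis by simp
  qed
  define B where "B = 2 * (1+s) * lam * M2"
  have Bnn: "B \<ge> 0" unfolding B_def using s_pos lam_pos M2pos by simp
  have Gmb: "Gm x \<le> B" if x: "x \<in> V" for x
  proof -
    have "Gm x \<le> G x" unfolding G_def using s_pos lam_pos by simp
    also have "\<dots> \<le> G x1" using x1 x by blast
    also have "\<dots> \<le> 2 * (1+s) * lam * (f x1)^2"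
    proof -
      have "2 * (1+s) * lam * (f x1)^2 = (1+s) * lam * (f x1)^2 + (1+s) * lam * (f x1)^2" by simp
      then show ?thesis unfolding G_def using g1 by linarith
    qed
    also have "\<dots> \<le> B" unfolding B_def M2_def using x0 x1 s_pos lam_pos by (intro mult_left_mono) auto
    finally show ?thesis .
  qed
  define K where "K = 2 * d * B"
  have KS: "\<forall>x\<in>V. (\<Sum>y\<in>nbrs V E x. (f x + f y)^2) \<le> K"
  proof
    fix x assume x: "x \<in> V"
    have "(\<Sum>y\<in>nbrs V E x. (f x + f y)^2) = 2 * real (deg V E x) * Gm x" using GmS2[OF x] S2_def by simp
    also have "\<dots> \<le> 2 * real (deg V E x) * B" using Gmb[OF x] by (intro mult_left_mono) auto
    also have "\<dots> \<le> 2 * d * B" using degle[OF x] Bnn by (intro mult_right_mono) auto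
    finally show "(\<Sum>y\<in>nbrs V E x. (f x + f y)^2) \<le> K" unfolding K_def .
  qed
  have K0: "K \<ge> 0" unfolding K_def d_def using Bnn by simp
  have vb: "2 * \<bar>f x0\<bar> \<le> (D * sqrt 2 + 1) * sqrt K"
    unfolding D_def by (rule vertex_bound[OF assms(1-3) x0(1) KS])
  define Q' where "Q' = (D * sqrt 2 + 1)^2"
  have "(2 * \<bar>f x0\<bar>)^2 \<le> ((D * sqrt 2 + 1) * sqrt K)^2"
    by (rule power_mono[OF vb]) simp
  then have "4 * M2 \<le> Q' * K" unfolding Q'_def M2_def using K0 by (simp add: power_mult_distrib)
  then have "4 * M2 \<le> (Q' * d * (1+s) * lam) * (4 * M2)" unfolding K_def B_def by (simp add: algebra_simps)
  then have "1 * (4 * M2) \<le> ((Q' * d * (1+s)) * lam) * (4 * M2)" by simp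
  moreover have p4: "0 < 4 * M2" using M2pos by simp
  ultimately have Qlam: "1 \<le> (Q' * d * (1+s)) * lam" by (rule mult_right_le_imp_le)
  have D0: "D \<ge> 0" unfolding D_def by simp
  have cge: "c \<ge> (D + 1) / 2" unfolding c_def D_def by (rule le_of_int_ceiling)
  have Q'le: "Q' \<le> 4 * (D + 1) * c"
  proof -
    have s2: "sqrt 2 \<le> 2" by (rule real_le_lsqrt) auto
    have "Q' = 2 * D^2 + 2 * sqrt 2 * D + 1" unfolding Q'_def by (simp add: power2_eq_square algebra_simps)
    also have "\<dots> \<le> 2 * D^2 + 4 * D + 2"
    proof -
      have "sqrt 2 * D \<le> 2 * D" using s2 D0 by (rule mult_right_mono)
      then show ?thesis by linarith
    qed
    also have "\<dots> = 4 * (D + 1) * ((D + 1) / 2)" by (simp add: power2_eq_square field_simps)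
    also have "\<dots> \<le> 4 * (D + 1) * c" using cge D0 by (intro mult_left_mono) auto
    finally show ?thesis .
  qed
  define Q where "Q = Q' * d * (1+s)"
  define P where "P = 4 * (1+s) * d * (D+1) * c"
  have Qpos: "Q > 0"
  proof -
    have "0 < Q * lam" using Qlam unfolding Q_def by linarith
    then show ?thesis using lam_pos by (simp add: zero_less_mult_iff)
  qed
  have "Q \<le> P"
  proof -
    have d0: "d \<ge> 0" unfolding d_def by simp
    have "Q' * d \<le> (4 * (D + 1) * c) * d" using Q'le d0 by (rule mult_right_mono)
    then have "Q' * d * (1+s) \<le> (4 * (D + 1) * c) * d * (1+s)" by (rule mult_right_mono) (use s_pos in simp)
    moreover have "(4 * (D + 1) * c) * d * (1+s) = P" unfolding P_def by (simp add: algebra_simps)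
    ultimately show ?thesis unfolding Q_def by simp
  qed
  then have "1 / P \<le> 1 / Q" using Qpos by (simp add: frac_le)
  also have "1 / Q \<le> lam" using Qlam Qpos unfolding Q_def by (simp add: field_simps)
  finally have "1 / P \<le> lam" .
  moreover have "1 / (4 * (1 + s)) * (1 / (d * (D + 1) * c)) = 1 / P"
    unfolding P_def by (simp add: field_simps)
  ultimately show ?thesis unfolding lam_def s_def d_def D_def c_def by simp
qed

end
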